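(* Let $i<n$ be positive integers with $n\equiv\pm1\pmod i$ and let $g:=e^{-Z}e^{-X}\exp\big(-\sum_{1\le k<i}\binom{i}{k}E_{ki}\big)\in SL_n$. Then all entries of the matrix $g$ are integers.
   Context: Work over a field of characteristic $0$. $e_{jk}$ is the $n\times n$ matrix unit, with $e_{jk}:=0$ if $j$ or $k\notin[1,n]$; $p\bmod q\in[0,q-1]$. $\epsilon:=1$ if $n\bmod i=1$, else $\epsilon:=-1$; $c_k:=\lfloor(n-k)/i\rfloor$, $a_k:=\epsilon((-nk)\bmod i)$. For $k,\ell\in\mathbb{Z}$, $\xi_{k\ell}:=\sum_{p\in\mathbb{Z}}e_{k+ip,\ell+ip}$, and $E_{k\ell}:=\xi_{k+1,\ell+1}$ if $n\bmod i=1$, $E_{k\ell}:=-\xi_{i-\ell,i-k}$ otherwise. $X:=\sum_{1\le j\le n-i}c_je_{j,j+i}$ and $Z:=\sum_{1\le j<i}a_j\xi_{j+1,j}$. *)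

theory Defs
  imports "Jordan_Normal_Form.Matrix"
begin

(* Matrices are n x n JNF matrices; the paper's 1-based indices j,k correspond to
   JNF 0-based entries (j-1,k-1). Indices in the paper's formulas are integers. *)

definition matsum :: "nat \<Rightarrow> ('b \<Rightarrow> 'a::comm_monoid_add mat) \<Rightarrow> 'b set \<Rightarrow> 'a mat" where
  "matsum n F S = mat n n (\<lambda>rc. \<Sum>j\<in>S. F j $$ rc)"

(* exponential of a nilpotent n x n matrix (A^n = 0, so the series is this finite sum) *)
definition nil_exp :: "nat \<Rightarrow> 'a::field_char_0 mat \<Rightarrow> 'a mat" where
  "nil_exp n A = matsum n (\<lambda>m. (1 / of_nat (fact m)) \<cdot>\<^sub>m (A ^\<^sub>m m)) {..n}"

(* matrix unit e_{jk} (1-based), zero if j or k not in [1,n] *)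
definition unitm :: "nat \<Rightarrow> int \<Rightarrow> int \<Rightarrow> 'a::{zero,one} mat" where
  "unitm n j k = mat n n (\<lambda>(r,c). if int r + 1 = j \<and> int c + 1 = k then 1 else 0)"

(* xi_{kl} = sum_{p in Z} e_{k+ip, l+ip}  (the summands are distinct units since i > 0) *)
definition xi :: "nat \<Rightarrow> nat \<Rightarrow> int \<Rightarrow> int \<Rightarrow> 'a::{zero,one} mat" where
  "xi n i k l = mat n n (\<lambda>(r,c).
      if (\<exists>p::int. int r + 1 = k + int i * p \<and> int c + 1 = l + int i * p) then 1 else 0)"

definition epsi :: "nat \<Rightarrow> nat \<Rightarrow> int" where
  "epsi n i = (if n mod i = 1 then 1 else -1)"

definition cc :: "nat \<Rightarrow> nat \<Rightarrow> int \<Rightarrow> int" where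
  "cc n i k = (int n - k) div int i"

definition aa :: "nat \<Rightarrow> nat \<Rightarrow> int \<Rightarrow> int" where
  "aa n i k = epsi n i * ((- int n * k) mod int i)"

definition EE :: "nat \<Rightarrow> nat \<Rightarrow> int \<Rightarrow> int \<Rightarrow> 'a::comm_ring_1 mat" where
  "EE n i k l = (if n mod i = 1 then xi n i (k + 1) (l + 1) else - xi n i (int i - l) (int i - k))"

definition XX :: "nat \<Rightarrow> nat \<Rightarrow> 'a::comm_ring_1 mat" where
  "XX n i = matsum n (\<lambda>j. of_int (cc n i j) \<cdot>\<^sub>m unitm n j (j + int i)) {1 .. int n - int i}"

definition ZZ :: "nat \<Rightarrow> nat \<Rightarrow> 'a::comm_ring_1 mat" where
  "ZZ n i = matsum n (\<lambda>j. of_int (aa n i j) \<cdot>\<^sub>m xi n i (j + 1) j) {1 ..< int i}"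

definition SS :: "nat \<Rightarrow> nat \<Rightarrow> 'a::comm_ring_1 mat" where
  "SS n i = matsum n (\<lambda>k. of_nat (i choose nat k) \<cdot>\<^sub>m EE n i k (int i)) {1 ..< int i}"

definition gmat :: "nat \<Rightarrow> nat \<Rightarrow> 'a::field_char_0 mat" where
  "gmat n i = nil_exp n (- ZZ n i) * nil_exp n (- XX n i) * nil_exp n (- SS n i)"

end

theory Submission
  imports Defs
begin

lemma gchoose_int_Ints:
  "((of_int z :: 'a::field_char_0) gchoose m) \<in> \<int>"
proof (cases "z \<ge> 0")
  case True
  then have "(of_int z :: 'a) = of_nat (nat z)" by simp
  then show ?thesis by (simp add: binomial_gbinomial[symmetric])
next
  case False
  have e: "(of_nat m - of_int z - 1 :: 'a) = of_nat (nat (int m - z - 1))"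
    using False by simp
  show ?thesis
    by (subst gbinomial_negated_upper) (simp add: e binomial_gbinomial[symmetric])
qed

lemma falling_Ints:
  "(\<Prod>t<m. (of_int z :: 'a::field_char_0) - of_nat t) / fact m \<in> \<int>"
  using gchoose_int_Ints[of z m] by (simp add: gbinomial_prod_rev atLeast0LessThan)

lemma rising_Ints:
  "(\<Prod>t<m. (of_int z :: 'a::field_char_0) + of_nat t) / fact m \<in> \<int>"
proof -
  have "(\<Prod>t<m. (of_int z :: 'a) + of_nat t) = (\<Prod>t<m. (-1) * (of_int (-z) - of_nat t))"
    by (rule prod.cong) simp_all
  also have "\<dots> = (-1)^m * (\<Prod>t<m. of_int (-z) - of_nat t)"
    by (subst prod.distrib) simp
  finally show ?thesis using falling_Ints[of "-z" m]
    by (metis Ints_1 Ints_minus Ints_mult Ints_power times_divide_eq_right)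
qed

lemma mult_index_sum:
  assumes "A \<in> carrier_mat n n" "B \<in> carrier_mat n n" "r < n" "c < n"
  shows "(A * B) $$ (r,c) = (\<Sum>k<n. A $$ (r,k) * B $$ (k,c))"
  using assms by (simp add: scalar_prod_def lessThan_atLeast0 mult.commute)

lemma nil_exp_index:
  assumes "A \<in> carrier_mat n n" "r < n" "c < n"
  shows "nil_exp n A $$ (r,c) = (\<Sum>m\<in>{..n}. (1 / of_nat (fact m)) * (A ^\<^sub>m m) $$ (r,c))"
proof -
  have "\<And>m. A ^\<^sub>m m \<in> carrier_mat n n" using assms(1) by simp
  then show ?thesis using assms unfolding nil_exp_def matsum_def by simp
qed

lemma carrier_nil_exp: "nil_exp n A \<in> carrier_mat n n"
  unfolding nil_exp_def matsum_def by simp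

lemma mult_Ints:
  assumes "A \<in> carrier_mat n n" "B \<in> carrier_mat n n"
    "\<forall>r<n. \<forall>c<n. A $$ (r,c) \<in> \<int>" "\<forall>r<n. \<forall>c<n. B $$ (r,c) \<in> \<int>"
  shows "\<forall>r<n. \<forall>c<n. (A * B) $$ (r,c) \<in> \<int>"
  using assms by (auto simp del: index_mult_mat simp add: mult_index_sum intro!: Ints_sum Ints_mult)

lemma lower_shift_pow:
  assumes A: "A \<in> carrier_mat n n"
    and w: "\<And>r c. r < n \<Longrightarrow> c < n \<Longrightarrow> A $$ (r,c) = (if r = c + 1 then w c else 0)"
  shows "r < n \<Longrightarrow> c < n \<Longrightarrow> (A ^\<^sub>m m) $$ (r,c) = (if r = c + m then (\<Prod>t<m. w (c + t)) else 0)"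
proof (induction m arbitrary: r c)
  case 0
  then show ?case using A by simp
next
  case (Suc m)
  have "(A ^\<^sub>m Suc m) $$ (r,c) = (\<Sum>k<n. (A ^\<^sub>m m) $$ (r,k) * A $$ (k,c))"
    using Suc.prems A by (simp del: index_mult_mat add: mult_index_sum)
  also have "\<dots> = (\<Sum>k<n. if k = c + 1 then (if r = c + 1 + m then (\<Prod>t<m. w (c + 1 + t)) * w c else 0) else 0)"
    by (rule sum.cong) (use Suc w in auto)
  also have "\<dots> = (if r = c + Suc m then (\<Prod>t<Suc m. w (c + t)) else 0)"
    using Suc.prems by (auto simp del: prod.lessThan_Suc simp add: prod.lessThan_Suc_shift mult.commute)
  finally show ?case .
qed

lemma upper_shift_pow:
  assumes A: "A \<in> carrier_mat n n"
    and w: "\<And>r c. r < n \<Longrightarrow> c < n \<Longrightarrow> A $$ (r,c) = (if c = r + d then w r else 0)"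
  shows "r < n \<Longrightarrow> c < n \<Longrightarrow> (A ^\<^sub>m m) $$ (r,c) = (if c = r + m * d then (\<Prod>t<m. w (r + t * d)) else 0)"
proof (induction m arbitrary: r c)
  case 0
  then show ?case using A by simp
next
  case (Suc m)
  have "(A ^\<^sub>m Suc m) $$ (r,c) = (\<Sum>k<n. (A ^\<^sub>m m) $$ (r,k) * A $$ (k,c))"
    using Suc.prems A by (simp del: index_mult_mat add: mult_index_sum)
  also have "\<dots> = (\<Sum>k<n. if k = r + m * d then (if c = r + m * d + d then (\<Prod>t<m. w (r + t * d)) * w (r + m * d) else 0) else 0)"
    by (rule sum.cong) (use Suc w in auto)
  also have "\<dots> = (if c = r + Suc m * d then (\<Prod>t<Suc m. w (r + t * d)) else 0)"
    using Suc.prems by (auto simp: add.assoc)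
  finally show ?case .
qed

lemma nil_exp_Ints:
  assumes "A \<in> carrier_mat n n"
    and "\<And>m r c. r < n \<Longrightarrow> c < n \<Longrightarrow> (1 / of_nat (fact m)) * (A ^\<^sub>m m) $$ (r,c) \<in> \<int>"
  shows "\<forall>r<n. \<forall>c<n. nil_exp n A $$ (r,c) \<in> \<int>"
  using assms by (auto simp: nil_exp_index intro!: Ints_sum)

lemma XX_carrier: "XX n i \<in> carrier_mat n n"
  unfolding XX_def matsum_def by simp

lemma XX_dims[simp]: "dim_row (XX n i) = n" "dim_col (XX n i) = n"
  unfolding XX_def matsum_def by simp_all

lemma XX_index:
  assumes "r < n" "c < n"
  shows "(XX n i :: 'a::comm_ring_1 mat) $$ (r,c) = (if c = r + i then of_int (cc n i (int r + 1)) else 0)"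
proof -
  have "(XX n i :: 'a mat) $$ (r,c) = (\<Sum>j\<in>{1 .. int n - int i}. of_int (cc n i j) * (unitm n j (j + int i) :: 'a mat) $$ (r,c))"
    using assms unfolding XX_def matsum_def unitm_def by simp
  also have "\<dots> = (\<Sum>j\<in>{1 .. int n - int i}. if j = int r + 1 then (if c = r + i then of_int (cc n i (int r + 1)) else 0) else 0)"
    by (rule sum.cong) (use assms in \<open>auto simp: unitm_def\<close>)
  also have "\<dots> = (if c = r + i then of_int (cc n i (int r + 1)) else 0)"
    using assms by auto
  finally show ?thesis .
qed

lemma cc_step:
  assumes "0 < i"
  shows "cc n i (int r + 1 + int t * int i) = cc n i (int r + 1) - int t"
proof -
  have e: "int n - (int r + 1 + int t * int i) = (int n - (int r + 1)) + (- int t) * int i" by simp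
  have "((int n - (int r + 1)) + (- int t) * int i) div int i = (- int t) + (int n - (int r + 1)) div int i"
    by (rule div_mult_self1) (use assms in simp)
  then show ?thesis unfolding cc_def e by simp
qed

lemma expX_Ints:
  assumes "0 < i"
  shows "\<forall>r<n. \<forall>c<n. nil_exp n (- XX n i :: 'a::field_char_0 mat) $$ (r,c) \<in> \<int>"
proof (rule nil_exp_Ints)
  show XC: "- XX n i \<in> carrier_mat n n" using XX_carrier by (rule uminus_carrier_mat)
  fix m r c assume rc: "r < n" "c < n"
  let ?w = "\<lambda>r. - (of_int (cc n i (int r + 1)) :: 'a)"
  have pw: "(- XX n i ^\<^sub>m m) $$ (r,c) = (if c = r + m * i then (\<Prod>t<m. ?w (r + t * i)) else 0)"
    by (rule upper_shift_pow[OF XC _ rc]) (auto simp: XX_index XX_carrier)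
  have pe: "(\<Prod>t<m. ?w (r + t * i)) = (\<Prod>t<m. of_int (- cc n i (int r + 1)) + of_nat t)"
  proof (rule prod.cong)
    fix t assume "t \<in> {..<m}"
    have "int (r + t * i) + 1 = int r + 1 + int t * int i" by simp
    then have "cc n i (int (r + t * i) + 1) = cc n i (int r + 1) - int t"
      using cc_step[OF assms, of n r t] by (simp add: ac_simps)
    then show "?w (r + t * i) = of_int (- cc n i (int r + 1)) + of_nat t"
      by (simp only:) simp
  qed simp
  show "(1 / of_nat (fact m)) * ((- XX n i :: 'a mat) ^\<^sub>m m) $$ (r,c) \<in> \<int>"
  proof (cases "c = r + m * i")
    case True
    then have "((- XX n i :: 'a mat) ^\<^sub>m m) $$ (r,c) = (\<Prod>t<m. of_int (- cc n i (int r + 1)) + of_nat t)"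
      using pw unfolding pe by simp
    then have "(1 / of_nat (fact m)) * ((- XX n i :: 'a mat) ^\<^sub>m m) $$ (r,c)
       = (\<Prod>t<m. of_int (- cc n i (int r + 1)) + of_nat t) / fact m"
      by simp
    then show ?thesis using rising_Ints[of "- cc n i (int r + 1)" m, where 'a='a] by simp
  qed (use pw in simp)
qed

lemma aa_mod: "aa n i (y mod int i) = aa n i y"
  unfolding aa_def by (metis minus_mult_left mod_mult_right_eq)

lemma aa_dvd: "int i dvd y \<Longrightarrow> aa n i y = 0"
  unfolding aa_def by auto

lemma aa_step1:
  assumes i: "0 < i" and n: "n mod i = 1" and y: "\<not> int i dvd y"
  shows "aa n i (y + 1) = aa n i y - 1"
proof -
  have ni: "int n mod int i = 1" using n by (metis of_nat_1 of_nat_mod)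
  have e: "\<And>y. (- int n * y) mod int i = (- y) mod int i"
  proof -
    fix y
    have "(- int n * y) mod int i = (- (int n * y)) mod int i" by simp
    also have "\<dots> = (- ((int n mod int i) * y mod int i)) mod int i"
      by (simp add: mod_minus_eq mod_mult_left_eq)
    also have "\<dots> = (- y) mod int i" by (simp add: ni mod_minus_eq)
    finally show "(- int n * y) mod int i = (- y) mod int i" .
  qed
  have ep: "epsi n i = 1" using n unfolding epsi_def by simp
  have a: "(- y) mod int i \<noteq> 0" using y by (simp add: mod_eq_0_iff_dvd)
  have b: "0 \<le> (- y) mod int i" "(- y) mod int i < int i" using i by simp_all
  have "(- (y + 1)) mod int i = ((- y) mod int i - 1) mod int i"
    by (simp add: mod_diff_left_eq)
  also have "\<dots> = (- y) mod int i - 1" using a b by (intro mod_pos_pos_trivial) auto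
  finally show ?thesis unfolding aa_def ep e by simp
qed

lemma aa_step2:
  assumes i: "0 < i" and n: "n mod i \<noteq> 1" and n2: "int n mod int i = (-1) mod int i"
    and y: "\<not> int i dvd (y + 1)"
  shows "aa n i (y + 1) = aa n i y - 1"
proof -
  have e: "\<And>y. (- int n * y) mod int i = y mod int i"
  proof -
    fix y
    have "(- int n * y) mod int i = ((- int n) mod int i * y) mod int i" by (simp add: mod_mult_left_eq)
    also have "(- int n) mod int i = 1 mod int i"
      by (metis n2 minus_minus mod_minus_eq)
    finally show "(- int n * y) mod int i = y mod int i" by (simp add: mod_mult_left_eq)
  qed
  have ep: "epsi n i = -1" using n unfolding epsi_def by simp
  have a: "y mod int i + 1 \<noteq> int i"
  proof
    assume "y mod int i + 1 = int i"
    then have "(y + 1) mod int i = 0" by (metis mod_add_left_eq mod_self)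
    then show False using y by (simp add: mod_eq_0_iff_dvd)
  qed
  have b: "0 \<le> y mod int i" "y mod int i < int i" using i by simp_all
  have "(y + 1) mod int i = (y mod int i + 1) mod int i" by (simp add: mod_add_left_eq)
  also have "\<dots> = y mod int i + 1" using a b by (intro mod_pos_pos_trivial) auto
  finally show ?thesis unfolding aa_def ep e by simp
qed

definition Hyp :: "nat \<Rightarrow> nat \<Rightarrow> bool" where
  "Hyp n i \<longleftrightarrow> (int n mod int i = 1 mod int i \<or> int n mod int i = (-1) mod int i)"

lemma aa_block:
  assumes i: "0 < i" and H: "Hyp n i" and nd: "\<forall>t<m. \<not> int i dvd (y + int t)"
  shows "t < m \<Longrightarrow> aa n i (y + int t) = aa n i y - int t"
proof (induction t)
  case 0 then show ?case by simp
next
  case (Suc t)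
  have tm: "t < m" "Suc t < m" using Suc.prems by simp_all
  have d1: "\<not> int i dvd (y + int t)" using nd tm(1) by blast
  have "\<not> int i dvd (y + int (Suc t))" using nd tm(2) by blast
  moreover have "y + int t + 1 = y + int (Suc t)" by simp
  ultimately have d2: "\<not> int i dvd (y + int t + 1)" by metis
  have IH: "aa n i (y + int t) = aa n i y - int t" using Suc.IH tm(1) by blast
  have "aa n i (y + int t + 1) = aa n i (y + int t) - 1"
  proof (cases "n mod i = 1")
    case True then show ?thesis using aa_step1[OF i True d1] by blast
  next
    case False
    have "int n mod int i = (-1) mod int i"
    proof (cases "i = 1")
      case True then show ?thesis by simp
    next
      case False2: False
      have "int n mod int i \<noteq> 1 mod int i"
      proof -
        have "1 < i" using False2 i by simp
        then have "1 mod int i = 1" by simp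
        moreover have "int n mod int i = int (n mod i)" by (simp add: of_nat_mod)
        ultimately show ?thesis using False by simp
      qed
      then show ?thesis using H unfolding Hyp_def by blast
    qed
    then show ?thesis using aa_step2[OF i False _ d2] by blast
  qed
  then show ?case using IH by (simp add: ac_simps)
qed

lemma ZZ_dims[simp]: "dim_row (ZZ n i) = n" "dim_col (ZZ n i) = n"
  unfolding ZZ_def matsum_def by simp_all

lemma ZZ_carrier: "ZZ n i \<in> carrier_mat n n"
  unfolding ZZ_def matsum_def by simp

lemma ZZ_index:
  assumes i: "0 < i" and rc: "r < n" "c < n"
  shows "(ZZ n i :: 'a::comm_ring_1 mat) $$ (r,c) = (if r = c + 1 then of_int (aa n i (int c + 1)) else 0)"
proof -
  let ?k = "(int c + 1) mod int i"
  have xe: "(xi n i (j + 1) j :: 'a mat) $$ (r,c) = (if j = ?k then (if r = c + 1 then 1 else 0) else 0)"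
    if j: "j \<in> {1..<int i}" for j
  proof -
    have "(\<exists>p. int r + 1 = j + 1 + int i * p \<and> int c + 1 = j + int i * p) \<longleftrightarrow> (j = ?k \<and> r = c + 1)"
    proof
      assume "\<exists>p. int r + 1 = j + 1 + int i * p \<and> int c + 1 = j + int i * p"
      then obtain p where p: "int r + 1 = j + 1 + int i * p" "int c + 1 = j + int i * p" by blast
      have "?k = j mod int i" using p(2) by simp
      also have "\<dots> = j" using j by (intro mod_pos_pos_trivial) auto
      finally show "j = ?k \<and> r = c + 1" using p by simp
    next
      assume h: "j = ?k \<and> r = c + 1"
      then show "\<exists>p. int r + 1 = j + 1 + int i * p \<and> int c + 1 = j + int i * p"
        by (intro exI[of _ "(int c + 1) div int i"]) (simp add: mod_div_mult_eq[symmetric, of "int c + 1" "int i"] algebra_simps)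
    qed
    then show ?thesis using rc unfolding xi_def by auto
  qed
  have "(ZZ n i :: 'a mat) $$ (r,c) = (\<Sum>j\<in>{1..<int i}. of_int (aa n i j) * (xi n i (j + 1) j :: 'a mat) $$ (r,c))"
    using rc unfolding ZZ_def matsum_def xi_def by simp
  also have "\<dots> = (\<Sum>j\<in>{1..<int i}. if j = ?k then (if r = c + 1 then of_int (aa n i ?k) else 0) else 0)"
    by (rule sum.cong) (auto simp: xe)
  also have "\<dots> = (if ?k \<in> {1..<int i} then (if r = c + 1 then of_int (aa n i ?k) else 0) else 0)"
    by simp
  also have "\<dots> = (if r = c + 1 then of_int (aa n i (int c + 1)) else 0)"
  proof (cases "?k = 0")
    case True
    then have "aa n i (int c + 1) = 0" by (intro aa_dvd) (simp add: mod_eq_0_iff_dvd)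
    then show ?thesis using True by simp
  next
    case False
    moreover have "0 \<le> ?k" "?k < int i" using i by simp_all
    ultimately have "?k \<in> {1..<int i}" by simp
    then show ?thesis by (simp add: aa_mod)
  qed
  finally show ?thesis .
qed

lemma expZ_Ints:
  assumes i: "0 < i" and H: "Hyp n i"
  shows "\<forall>r<n. \<forall>c<n. nil_exp n (- ZZ n i :: 'a::field_char_0 mat) $$ (r,c) \<in> \<int>"
proof (rule nil_exp_Ints)
  show ZC: "- ZZ n i \<in> carrier_mat n n" using ZZ_carrier by (rule uminus_carrier_mat)
  fix m r c assume rc: "r < n" "c < n"
  let ?w = "\<lambda>c. - (of_int (aa n i (int c + 1)) :: 'a)"
  have pw: "((- ZZ n i :: 'a mat) ^\<^sub>m m) $$ (r,c) = (if r = c + m then (\<Prod>t<m. ?w (c + t)) else 0)"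
    by (rule lower_shift_pow[OF ZC _ rc]) (auto simp: ZZ_index[OF i] ZZ_carrier)
  have ee: "int (c + t) + 1 = int c + 1 + int t" for t by simp
  show "(1 / of_nat (fact m)) * ((- ZZ n i :: 'a mat) ^\<^sub>m m) $$ (r,c) \<in> \<int>"
  proof (cases "r = c + m")
    case False then show ?thesis using pw by simp
  next
    case True
    show ?thesis
    proof (cases "\<exists>t<m. int i dvd (int c + 1 + int t)")
      case True2: True
      then obtain t where t: "t < m" "int i dvd (int c + 1 + int t)" by blast
      then have "?w (c + t) = 0" using aa_dvd[of i "int c + 1 + int t" n] by (simp only: ee) simp
      then have pz: "(\<Prod>t<m. ?w (c + t)) = 0" using t(1) by (intro prod_zero) auto
      have "((- ZZ n i :: 'a mat) ^\<^sub>m m) $$ (r,c) = 0"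
        using pw True pz by metis
      then show ?thesis by simp
    next
      case False
      have "(\<Prod>t<m. ?w (c + t)) = (\<Prod>t<m. of_int (- aa n i (int c + 1)) + of_nat t)"
      proof (rule prod.cong)
        fix t assume "t \<in> {..<m}"
        then have "aa n i (int c + 1 + int t) = aa n i (int c + 1) - int t"
          using aa_block[OF i H, of m "int c + 1" t] False by auto
        then show "?w (c + t) = of_int (- aa n i (int c + 1)) + of_nat t"
          by (simp only: ee) simp
      qed simp
      then have "((- ZZ n i :: 'a mat) ^\<^sub>m m) $$ (r,c) = (\<Prod>t<m. of_int (- aa n i (int c + 1)) + of_nat t)"
        using pw True by simp
      then have "(1 / of_nat (fact m)) * ((- ZZ n i :: 'a mat) ^\<^sub>m m) $$ (r,c)
         = (\<Prod>t<m. of_int (- aa n i (int c + 1)) + of_nat t) / fact m" by simp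
      then show ?thesis using rising_Ints[of "- aa n i (int c + 1)" m, where 'a='a] by simp
    qed
  qed
qed

lemma sqzero_pow:
  assumes A: "A \<in> carrier_mat n n"
    and P: "\<And>r c. r < n \<Longrightarrow> c < n \<Longrightarrow> A $$ (r,c) \<noteq> 0 \<Longrightarrow> P c \<and> \<not> P r"
  shows "r < n \<Longrightarrow> c < n \<Longrightarrow> (A ^\<^sub>m Suc (Suc m)) $$ (r,c) = 0"
proof (induction m arbitrary: r c)
  case 0
  have "A ^\<^sub>m Suc (Suc 0) = A * A" using A by simp
  moreover have "(A * A) $$ (r,c) = (\<Sum>k<n. A $$ (r,k) * A $$ (k,c))"
    using 0 A by (simp del: index_mult_mat add: mult_index_sum)
  moreover have "(\<Sum>k<n. A $$ (r,k) * A $$ (k,c)) = 0"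
  proof (rule sum.neutral, intro ballI)
    fix k assume k: "k \<in> {..<n}"
    show "A $$ (r,k) * A $$ (k,c) = 0"
    proof (cases "A $$ (r,k) = 0")
      case False
      then have "P k" using P 0 k by auto
      then have "A $$ (k,c) = 0" using P 0 k by auto
      then show ?thesis by simp
    qed simp
  qed
  ultimately show ?case by simp
next
  case (Suc m)
  have "(A ^\<^sub>m Suc (Suc (Suc m))) $$ (r,c) = (\<Sum>k<n. (A ^\<^sub>m Suc (Suc m)) $$ (r,k) * A $$ (k,c))"
    unfolding pow_mat.simps(2)[of A "Suc (Suc m)"] by (rule mult_index_sum) (use A Suc.prems in auto)
  also have "\<dots> = 0" using Suc by simp
  finally show ?case .
qed

lemma sqzero_exp_Ints:
  assumes A: "A \<in> carrier_mat n n"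
    and I: "\<And>r c. r < n \<Longrightarrow> c < n \<Longrightarrow> A $$ (r,c) \<in> \<int>"
    and P: "\<And>r c. r < n \<Longrightarrow> c < n \<Longrightarrow> A $$ (r,c) \<noteq> 0 \<Longrightarrow> P c \<and> \<not> P r"
  shows "\<forall>r<n. \<forall>c<n. nil_exp n (A :: 'a::field_char_0 mat) $$ (r,c) \<in> \<int>"
proof (rule nil_exp_Ints[OF A])
  fix m r c assume rc: "r < n" "c < n"
  show "(1 / of_nat (fact m)) * (A ^\<^sub>m m) $$ (r,c) \<in> \<int>"
  proof (cases m)
    case 0 then show ?thesis using A rc by simp
  next
    case (Suc m')
    show ?thesis
    proof (cases m')
      case 0
      have "A ^\<^sub>m 1 = A" using A by simp
      then show ?thesis using Suc 0 I[OF rc] by simp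
    next
      case (Suc m'')
      then show ?thesis using \<open>m = Suc m'\<close> sqzero_pow[OF A P rc] by simp
    qed
  qed
qed

definition shf :: "nat \<Rightarrow> nat \<Rightarrow> int" where
  "shf n i = (if n mod i = 1 then 0 else 1)"

definition Pr :: "nat \<Rightarrow> nat \<Rightarrow> nat \<Rightarrow> bool" where
  "Pr n i x = (int i dvd (int x + shf n i) \<longleftrightarrow> n mod i = 1)"

lemma xi_dims[simp]: "dim_row (xi n i k l) = n" "dim_col (xi n i k l) = n"
  unfolding xi_def by simp_all

lemma EE_props:
  assumes k: "k \<in> {1..<int i}" and rc: "r < n" "c < n"
  shows "(EE n i k (int i) :: 'a::comm_ring_1 mat) $$ (r,c) \<in> \<int>"
    "(EE n i k (int i) :: 'a mat) $$ (r,c) \<noteq> 0 \<Longrightarrow> Pr n i c \<and> \<not> Pr n i r"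
proof -
  have kd: "\<not> int i dvd k" using k zdvd_imp_le[of "int i" k] by auto
  show "(EE n i k (int i) :: 'a mat) $$ (r,c) \<in> \<int>"
    using rc unfolding EE_def xi_def by auto
  assume nz: "(EE n i k (int i) :: 'a mat) $$ (r,c) \<noteq> 0"
  show "Pr n i c \<and> \<not> Pr n i r"
  proof (cases "n mod i = 1")
    case True
    then obtain p where p: "int r + 1 = k + 1 + int i * p" "int c + 1 = int i + 1 + int i * p"
      using nz rc unfolding EE_def xi_def by (auto split: if_splits)
    have "int c = int i * (p + 1)" using p by (simp add: algebra_simps)
    moreover have "int r = k + int i * p" using p by simp
    ultimately show ?thesis using True kd unfolding shf_def Pr_def
      by (auto simp: dvd_add_left_iff)
  next
    case False
    then obtain p where p: "int r + 1 = 0 + int i * p" "int c + 1 = int i - int i + int i * p - k + int i"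
      using nz rc unfolding EE_def xi_def by (auto split: if_splits simp: algebra_simps)
    have "int r + 1 = int i * p" using p by simp
    moreover have "int c + 1 = int i * (p + 1) - k" using p by (simp add: algebra_simps)
    ultimately show ?thesis using False kd unfolding shf_def Pr_def
      by (auto simp: dvd_diff_right_iff dvd_add_left_iff)
  qed
qed

lemma SS_dims[simp]: "dim_row (SS n i) = n" "dim_col (SS n i) = n"
  unfolding SS_def matsum_def by simp_all

lemma SS_carrier: "SS n i \<in> carrier_mat n n"
  unfolding SS_def matsum_def by simp

lemma EE_dims[simp]: "dim_row (EE n i k l) = n" "dim_col (EE n i k l) = n"
  unfolding EE_def by simp_all

lemma SS_index:
  assumes "r < n" "c < n"
  shows "(SS n i :: 'a::comm_ring_1 mat) $$ (r,c) = (\<Sum>k\<in>{1..<int i}. of_nat (i choose nat k) * (EE n i k (int i) :: 'a mat) $$ (r,c))"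
  using assms unfolding SS_def matsum_def by simp

lemma expS_Ints:
  shows "\<forall>r<n. \<forall>c<n. nil_exp n (- SS n i :: 'a::field_char_0 mat) $$ (r,c) \<in> \<int>"
proof (rule sqzero_exp_Ints[where P = "Pr n i"])
  show "- SS n i \<in> carrier_mat n n" using SS_carrier by (rule uminus_carrier_mat)
  fix r c assume rc: "r < n" "c < n"
  show "(- SS n i :: 'a mat) $$ (r,c) \<in> \<int>"
    using rc by (auto simp: SS_index intro!: Ints_sum Ints_mult EE_props(1))
  assume nz: "(- SS n i :: 'a mat) $$ (r,c) \<noteq> 0"
  then have "(\<Sum>k\<in>{1..<int i}. of_nat (i choose nat k) * (EE n i k (int i) :: 'a mat) $$ (r,c)) \<noteq> 0"
    using rc by (simp add: SS_index)
  then obtain k where k: "k \<in> {1..<int i}" "(EE n i k (int i) :: 'a mat) $$ (r,c) \<noteq> 0"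
    by (metis (no_types, lifting) mult_zero_right sum.neutral)
  show "Pr n i c \<and> \<not> Pr n i r" using EE_props(2)[OF k(1) rc k(2)] .
qed

theorem proposition4p5:
  fixes n i :: nat
  assumes "0 < i" and "i < n"
    and "int n mod int i = 1 mod int i \<or> int n mod int i = (-1) mod int i"
  shows "\<forall>r<n. \<forall>c<n. (gmat n i :: 'a::field_char_0 mat) $$ (r, c) \<in> \<int>"
proof -
  have H: "Hyp n i" using assms(3) unfolding Hyp_def .
  have 1: "\<forall>r<n. \<forall>c<n. (nil_exp n (- ZZ n i) * nil_exp n (- XX n i) :: 'a mat) $$ (r, c) \<in> \<int>"
    by (rule mult_Ints[OF carrier_nil_exp carrier_nil_exp expZ_Ints[OF assms(1) H] expX_Ints[OF assms(1)]])
  show ?thesis unfolding gmat_def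
    by (rule mult_Ints[OF _ carrier_nil_exp 1 expS_Ints])
       (use carrier_nil_exp in \<open>metis mult_carrier_mat\<close>)
qed

end
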